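(* Let $\mathcal X,\mathcal U$ be finite nonempty sets, $f:\mathcal X\times\mathcal U\to\mathcal X$, $\ell,g:\mathcal X\to\mathbb R$ and $\gamma\in(0,1)$. For a stochastic policy $\pi:\mathcal X\to\Delta(\mathcal U)$ let $\tilde V^{\gamma,\pi}_{\mathrm{RA}}:\mathcal X\to\mathbb R$ be the unique solution of $$\tilde V^{\gamma,\pi}_{\mathrm{RA}}(x)=(1-\gamma)\min\{\ell(x),g(x)\}+\gamma\,\mathbb E_{u\sim\pi(x)}\Big[\min\big\{\max\{\tilde V^{\gamma,\pi}_{\mathrm{RA}}(f(x,u)),\ell(x)\},g(x)\big\}\Big],$$ and let $V^{\gamma,*}_{\mathrm{RA}}:\mathcal X\to\mathbb R$ be the unique solution of $$V^{\gamma,*}_{\mathrm{RA}}(x)=(1-\gamma)\min\{\ell(x),g(x)\}+\gamma\min\Big\{\max\big\{\max_{u\in\mathcal U}V^{\gamma,*}_{\mathrm{RA}}(f(x,u)),\ell(x)\big\},g(x)\Big\}.$$ Then $\tilde V^{\gamma,\pi}_{\mathrm{RA}}\le V^{\gamma,*}_{\mathrm{RA}}$ pointwise for every stochastic policy $\pi$, and there exists a stochastic policy $\pi^*:\mathcal X\to\Delta(\mathcal U)$ with $\tilde V^{\gamma,\pi^*}_{\mathrm{RA}}=V^{\gamma,*}_{\mathrm{RA}}$.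
   Context: $\Delta(\mathcal U)$ denotes the set of probability distributions on $\mathcal U$. Both fixed-point equations are defined by $\gamma$-contractive operators on real functions on $\mathcal X$, so their solutions exist and are unique. *)

theory Defs
  imports "HOL-Probability.Probability"
begin

definition RA_policy_value ::
  "('x \<Rightarrow> 'u \<Rightarrow> 'x) \<Rightarrow> ('x \<Rightarrow> real) \<Rightarrow> ('x \<Rightarrow> real) \<Rightarrow> real \<Rightarrow> ('x \<Rightarrow> 'u pmf) \<Rightarrow> 'x \<Rightarrow> real" where
  "RA_policy_value f l g \<gamma> \<pi> = (THE V. \<forall>x. V x =
      (1 - \<gamma>) * min (l x) (g x)
      + \<gamma> * measure_pmf.expectation (\<pi> x) (\<lambda>u. min (max (V (f x u)) (l x)) (g x)))"

definition RA_opt_value ::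
  "('x \<Rightarrow> 'u::finite \<Rightarrow> 'x) \<Rightarrow> ('x \<Rightarrow> real) \<Rightarrow> ('x \<Rightarrow> real) \<Rightarrow> real \<Rightarrow> 'x \<Rightarrow> real" where
  "RA_opt_value f l g \<gamma> = (THE V. \<forall>x. V x =
      (1 - \<gamma>) * min (l x) (g x)
      + \<gamma> * min (max (Max (range (\<lambda>u. V (f x u)))) (l x)) (g x))"

end

theory Submission
  imports Defs
begin

definition contr :: "real \<Rightarrow> (('x \<Rightarrow> real) \<Rightarrow> ('x \<Rightarrow> real)) \<Rightarrow> bool" where
  "contr c T \<longleftrightarrow> (\<forall>v w M. 0 \<le> M \<longrightarrow> (\<forall>y. v y \<le> w y + M) \<longrightarrow> (\<forall>x. T v x \<le> T w x + c * M))"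

lemma contr_pow:
  fixes T :: "('x \<Rightarrow> real) \<Rightarrow> ('x \<Rightarrow> real)"
  assumes "0 \<le> c" "contr c T"
  shows "contr (c ^ k) (T ^^ k)"
proof (induction k)
  case 0
  then show ?case by (auto simp: contr_def)
next
  case (Suc k)
  show ?case unfolding contr_def
  proof (intro allI impI)
    fix v w :: "'x \<Rightarrow> real" and M x assume M: "(0::real) \<le> M" "\<forall>y. v y \<le> w y + M"
    have "\<forall>y. (T ^^ k) v y \<le> (T ^^ k) w y + c ^ k * M"
      using Suc M unfolding contr_def by blast
    moreover have "0 \<le> c ^ k * M" using assms M by simp
    ultimately have "T ((T ^^ k) v) x \<le> T ((T ^^ k) w) x + c * (c ^ k * M)"
      using assms(2) unfolding contr_def by blast
    then show "(T ^^ Suc k) v x \<le> (T ^^ Suc k) w x + c ^ Suc k * M"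
      by (simp add: mult.assoc)
  qed
qed

lemma contr_le:
  fixes T :: "('x::finite \<Rightarrow> real) \<Rightarrow> ('x \<Rightarrow> real)"
  assumes "0 \<le> c" "c < 1" "contr c T" "\<forall>x. v x \<le> T v x" "T w = w"
  shows "v x \<le> w x"
proof -
  define M where "M = max 0 (Max (range (\<lambda>x. v x - w x)))"
  have M0: "0 \<le> M" unfolding M_def by simp
  have vw: "\<forall>y. v y \<le> w y + M"
  proof
    fix y
    have "v y - w y \<le> Max (range (\<lambda>x. v x - w x))" by (rule Max_ge) auto
    then show "v y \<le> w y + M" unfolding M_def by linarith
  qed
  have le: "v z - w z \<le> c * M" for z
  proof -
    have "T v z \<le> T w z + c * M" using assms(3) M0 vw unfolding contr_def by blast
    then show ?thesis using assms(4,5) by (metis add.commute diff_le_eq order_trans)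
  qed
  have "Max (range (\<lambda>x. v x - w x)) \<le> c * M" using le by (subst Max_le_iff) auto
  moreover have "0 \<le> c * M" using assms M0 by simp
  ultimately have "M \<le> c * M" unfolding M_def by simp
  then have "M \<le> 0" using assms(2) M0 by (metis mult_le_cancel_right1 not_le)
  then show ?thesis using vw by (metis add.right_neutral add_left_mono order_trans)
qed

lemma contr_fix:
  fixes T :: "('x::finite \<Rightarrow> real) \<Rightarrow> ('x \<Rightarrow> real)"
  assumes c: "0 \<le> c" "c < 1" and T: "contr c T"
  shows "\<exists>!V. T V = V"
proof -
  have uniq: "V = W" if "T V = V" "T W = W" for V W
    using contr_le[OF c T] that by (metis antisym order_refl ext)
  obtain k where k: "c ^ k < 1 / real CARD('x)"
    using real_arch_pow_inv[of "1 / real CARD('x)" c] c by auto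
  have card1: "1 \<le> real CARD('x)" by simp
  have ck: "real CARD('x) * c ^ k < 1" using k card1 by (simp add: field_simps)
  have ck0: "0 \<le> c ^ k" using c by simp
  have ck1: "c ^ k < 1" using ck card1 ck0
    by (smt (verit, best) mult_le_cancel_right1)
  define S where "S = T ^^ k"
  have cS: "contr (c ^ k) S" unfolding S_def by (rule contr_pow[OF c(1) T])
  define F where "F a = (\<chi> i. S (vec_nth a) i)" for a :: "real^'x"
  have lip: "dist (F a) (F b) \<le> (real CARD('x) * c ^ k) * dist a b" for a b
  proof -
    define d where "d = dist a b"
    have d0: "0 \<le> d" unfolding d_def by simp
    have comp: "\<bar>a $ y - b $ y\<bar> \<le> d" for y
      using component_le_norm_cart[of "a - b" y] unfolding d_def dist_norm by simp
    have h0: "a $ y \<le> b $ y + d \<and> b $ y \<le> a $ y + d" for y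
      using comp[of y] by (simp add: abs_le_iff)
    have h1: "\<forall>y. a $ y \<le> b $ y + d" "\<forall>y. b $ y \<le> a $ y + d"
      using h0 by auto
    have "S (vec_nth a) i \<le> S (vec_nth b) i + c ^ k * d" for i
      using cS d0 h1(1) unfolding contr_def by blast
    moreover have "S (vec_nth b) i \<le> S (vec_nth a) i + c ^ k * d" for i
      using cS d0 h1(2) unfolding contr_def by blast
    ultimately have ci0: "\<bar>S (vec_nth a) i - S (vec_nth b) i\<bar> \<le> c ^ k * d" for i
      by (simp add: abs_le_iff) (smt (verit))
    have ci: "\<bar>(F a - F b) $ i\<bar> \<le> c ^ k * d" for i
      unfolding F_def using ci0 by simp
    have "dist (F a) (F b) = norm (F a - F b)" by (simp add: dist_norm)
    also have "\<dots> \<le> (\<Sum>i\<in>UNIV. \<bar>(F a - F b) $ i\<bar>)" by (rule norm_le_l1_cart)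
    also have "\<dots> \<le> (\<Sum>i\<in>(UNIV::'x set). c ^ k * d)" by (rule sum_mono) (rule ci)
    also have "\<dots> = (real CARD('x) * c ^ k) * d" by simp
    finally show ?thesis unfolding d_def .
  qed
  have "\<exists>!p. F p = p"
    by (rule banach_fix_type[of "real CARD('x) * c ^ k"]) (use ck ck0 lip in auto)
  then obtain p where p: "F p = p" by blast
  define q where "q = vec_nth p"
  have Sq: "S q = q"
  proof
    fix i
    have "F p $ i = p $ i" using p by simp
    then show "S q i = q i" unfolding F_def q_def by simp
  qed
  have STq: "S (T q) = T q" unfolding S_def using Sq[unfolded S_def]
    by (metis funpow_swap1)
  have "T q = q"
  proof
    fix x
    show "T q x = q x"
      using contr_le[OF ck0 ck1 cS, of "T q" q x] contr_le[OF ck0 ck1 cS, of q "T q" x] STq Sq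
      by (metis antisym order_refl)
  qed
  then show ?thesis using uniq by blast
qed


definition Tp :: "('x \<Rightarrow> 'u \<Rightarrow> 'x) \<Rightarrow> ('x \<Rightarrow> real) \<Rightarrow> ('x \<Rightarrow> real) \<Rightarrow> real \<Rightarrow> ('x \<Rightarrow> 'u pmf) \<Rightarrow> ('x \<Rightarrow> real) \<Rightarrow> 'x \<Rightarrow> real" where
  "Tp f l g \<gamma> \<pi> V = (\<lambda>x. (1 - \<gamma>) * min (l x) (g x)
      + \<gamma> * measure_pmf.expectation (\<pi> x) (\<lambda>u. min (max (V (f x u)) (l x)) (g x)))"

definition Ts :: "('x \<Rightarrow> 'u::finite \<Rightarrow> 'x) \<Rightarrow> ('x \<Rightarrow> real) \<Rightarrow> ('x \<Rightarrow> real) \<Rightarrow> real \<Rightarrow> ('x \<Rightarrow> real) \<Rightarrow> 'x \<Rightarrow> real" where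
  "Ts f l g \<gamma> V = (\<lambda>x. (1 - \<gamma>) * min (l x) (g x)
      + \<gamma> * min (max (Max (range (\<lambda>u. V (f x u)))) (l x)) (g x))"

lemma expect_mono:
  fixes p :: "'u::finite pmf" and a b :: "'u \<Rightarrow> real"
  assumes "\<forall>u. a u \<le> b u + M"
  shows "measure_pmf.expectation p a \<le> measure_pmf.expectation p b + M"
proof -
  have int: "integrable (measure_pmf p) h" for h :: "'u \<Rightarrow> real"
    by (rule integrable_measure_pmf_finite) simp
  have "measure_pmf.expectation p a \<le> measure_pmf.expectation p (\<lambda>u. b u + M)"
    by (rule Bochner_Integration.integral_mono) (use assms int in auto)
  also have "\<dots> = measure_pmf.expectation p b + M"
    by (subst Bochner_Integration.integral_add[OF int int]) simp
  finally show ?thesis .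
qed

lemma clip_mono: "0 \<le> M \<Longrightarrow> a \<le> b + M \<Longrightarrow> min (max a (c::real)) d \<le> min (max b c) d + M"
  by linarith

lemma contr_Tp:
  fixes f :: "'x \<Rightarrow> 'u::finite \<Rightarrow> 'x"
  assumes "0 < \<gamma>"
  shows "contr \<gamma> (Tp f l g \<gamma> \<pi>)"
  unfolding contr_def
proof (intro allI impI)
  fix v w :: "'x \<Rightarrow> real" and M x
  assume M: "0 \<le> M" "\<forall>y. v y \<le> w y + M"
  have "measure_pmf.expectation (\<pi> x) (\<lambda>u. min (max (v (f x u)) (l x)) (g x))
     \<le> measure_pmf.expectation (\<pi> x) (\<lambda>u. min (max (w (f x u)) (l x)) (g x)) + M"
    by (rule expect_mono) (use M clip_mono in blast)
    then have "\<gamma> * measure_pmf.expectation (\<pi> x) (\<lambda>u. min (max (v (f x u)) (l x)) (g x))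
     \<le> \<gamma> * (measure_pmf.expectation (\<pi> x) (\<lambda>u. min (max (w (f x u)) (l x)) (g x)) + M)"
      using assms by (intro mult_left_mono) auto
    then show "Tp f l g \<gamma> \<pi> v x \<le> Tp f l g \<gamma> \<pi> w x + \<gamma> * M"
    unfolding Tp_def by (simp add: algebra_simps)
qed

lemma contr_Ts:
  fixes f :: "'x \<Rightarrow> 'u::finite \<Rightarrow> 'x"
  assumes "0 < \<gamma>"
  shows "contr \<gamma> (Ts f l g \<gamma>)"
  unfolding contr_def
proof (intro allI impI)
  fix v w :: "'x \<Rightarrow> real" and M x
  assume M: "0 \<le> M" "\<forall>y. v y \<le> w y + M"
  have "Max (range (\<lambda>u. v (f x u))) \<le> Max (range (\<lambda>u. w (f x u))) + M"
  proof (subst Max_le_iff, simp, simp, intro ballI)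
    fix t assume "t \<in> range (\<lambda>u. v (f x u))"
    then obtain u where u: "t = v (f x u)" by auto
    have "w (f x u) \<le> Max (range (\<lambda>u. w (f x u)))" by (rule Max_ge) auto
    moreover have "v (f x u) \<le> w (f x u) + M" using M by blast
    ultimately show "t \<le> Max (range (\<lambda>u. w (f x u))) + M" using u by linarith
  qed
  then have "min (max (Max (range (\<lambda>u. v (f x u)))) (l x)) (g x)
     \<le> min (max (Max (range (\<lambda>u. w (f x u)))) (l x)) (g x) + M"
    using clip_mono M by blast
  then have "\<gamma> * min (max (Max (range (\<lambda>u. v (f x u)))) (l x)) (g x)
     \<le> \<gamma> * (min (max (Max (range (\<lambda>u. w (f x u)))) (l x)) (g x) + M)"
      using assms by (intro mult_left_mono) auto
  then show "Ts f l g \<gamma> v x \<le> Ts f l g \<gamma> w x + \<gamma> * M"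
    unfolding Ts_def by (simp add: algebra_simps)
qed

lemma Tp_le_Ts:
  fixes f :: "'x \<Rightarrow> 'u::finite \<Rightarrow> 'x"
  assumes "0 < \<gamma>"
  shows "Tp f l g \<gamma> \<pi> V x \<le> Ts f l g \<gamma> V x"
proof -
  have "\<forall>u. min (max (V (f x u)) (l x)) (g x) \<le> 0 + min (max (Max (range (\<lambda>u. V (f x u)))) (l x)) (g x)"
  proof
    fix u
    have "V (f x u) \<le> Max (range (\<lambda>u. V (f x u)))" by (rule Max_ge) auto
    then show "min (max (V (f x u)) (l x)) (g x) \<le> 0 + min (max (Max (range (\<lambda>u. V (f x u)))) (l x)) (g x)"
      by linarith
  qed
  from expect_mono[OF this, of "\<pi> x"]
  have "measure_pmf.expectation (\<pi> x) (\<lambda>u. min (max (V (f x u)) (l x)) (g x))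
     \<le> min (max (Max (range (\<lambda>u. V (f x u)))) (l x)) (g x)" by simp
  then show ?thesis unfolding Tp_def Ts_def using assms by simp
qed

theorem mainTheorem17:
  fixes f :: "'x::finite \<Rightarrow> 'u::finite \<Rightarrow> 'x"
    and l g :: "'x \<Rightarrow> real"
    and \<gamma> :: real
  assumes "0 < \<gamma>" and "\<gamma> < 1"
  shows "(\<forall>\<pi> :: 'x \<Rightarrow> 'u pmf. \<forall>x. RA_policy_value f l g \<gamma> \<pi> x \<le> RA_opt_value f l g \<gamma> x)
       \<and> (\<exists>\<pi>star :: 'x \<Rightarrow> 'u pmf. RA_policy_value f l g \<gamma> \<pi>star = RA_opt_value f l g \<gamma>)"
proof -
  have g0: "0 \<le> \<gamma>" using assms by simp
  have pv: "RA_policy_value f l g \<gamma> \<pi> = (THE V. Tp f l g \<gamma> \<pi> V = V)" for \<pi> :: "'x \<Rightarrow> 'u pmf"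
  proof -
    have "(\<lambda>V. \<forall>x. V x = (1 - \<gamma>) * min (l x) (g x)
      + \<gamma> * measure_pmf.expectation (\<pi> x) (\<lambda>u. min (max (V (f x u)) (l x)) (g x)))
      = (\<lambda>V. Tp f l g \<gamma> \<pi> V = V)"
      unfolding Tp_def by (rule ext) (metis (no_types, lifting) ext)
    then show ?thesis unfolding RA_policy_value_def by simp
  qed
  have ov: "RA_opt_value f l g \<gamma> = (THE V. Ts f l g \<gamma> V = V)"
  proof -
    have "(\<lambda>V. \<forall>x. V x = (1 - \<gamma>) * min (l x) (g x)
      + \<gamma> * min (max (Max (range (\<lambda>u. V (f x u)))) (l x)) (g x))
      = (\<lambda>V. Ts f l g \<gamma> V = V)"
      unfolding Ts_def by (rule ext) (metis (no_types, lifting) ext)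
    then show ?thesis unfolding RA_opt_value_def by simp
  qed
  have exp: "\<exists>!V. Tp f l g \<gamma> \<pi> V = V" for \<pi> :: "'x \<Rightarrow> 'u pmf"
    by (rule contr_fix[OF g0 assms(2) contr_Tp[OF assms(1)]])
  have exs: "\<exists>!V. Ts f l g \<gamma> V = V"
    by (rule contr_fix[OF g0 assms(2) contr_Ts[OF assms(1)]])
  define Vs where "Vs = RA_opt_value f l g \<gamma>"
  have Vs: "Ts f l g \<gamma> Vs = Vs" unfolding Vs_def ov by (rule theI'[OF exs])
  have Vp: "Tp f l g \<gamma> \<pi> (RA_policy_value f l g \<gamma> \<pi>) = RA_policy_value f l g \<gamma> \<pi>" for \<pi>
    unfolding pv by (rule theI'[OF exp])
  have part1: "RA_policy_value f l g \<gamma> \<pi> x \<le> Vs x" for \<pi> :: "'x \<Rightarrow> 'u pmf" and x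
  proof (rule contr_le[OF g0 assms(2) contr_Ts[OF assms(1)] _ Vs])
    show "\<forall>x. RA_policy_value f l g \<gamma> \<pi> x \<le> Ts f l g \<gamma> (RA_policy_value f l g \<gamma> \<pi>) x"
      using Tp_le_Ts[OF assms(1)] Vp by metis
  qed
  define us where "us x = (SOME u. Vs (f x u) = Max (range (\<lambda>u. Vs (f x u))))" for x
  have us: "Vs (f x (us x)) = Max (range (\<lambda>u. Vs (f x u)))" for x
  proof -
    have "Max (range (\<lambda>u. Vs (f x u))) \<in> range (\<lambda>u. Vs (f x u))" by (rule Max_in) auto
    then have "\<exists>u. Vs (f x u) = Max (range (\<lambda>u. Vs (f x u)))" by (metis imageE)
    then show ?thesis unfolding us_def by (rule someI_ex)
  qed
  define ps where "ps x = return_pmf (us x)" for x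
  have "Tp f l g \<gamma> ps Vs = Ts f l g \<gamma> Vs"
    unfolding Tp_def Ts_def ps_def by (rule ext) (simp add: us)
  then have "Tp f l g \<gamma> ps Vs = Vs" using Vs by simp
  then have "RA_policy_value f l g \<gamma> ps = Vs"
    using exp[of ps] Vp[of ps] by blast
  then show ?thesis using part1 unfolding Vs_def by blast
qed

end
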